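(* Let $(\mathcal S,\mathcal A,P,R,\rho)$ be a finite Episodic Learning Process with terminal set $\mathcal S_\bot$, and let $\gamma:\mathcal S\to[0,1]$ be any discounting function such that $\gamma(s)<1$ for every terminal state $s\in\mathcal S_\bot$. Then: (1) $\mathcal B^\gamma$ has a unique fixed point in $\mathcal Q$, i.e. the equation $Q=\mathcal B^\gamma Q$ has exactly one solution $Q\in\mathcal Q$; (2) this fixed point equals $\lim_{n\to\infty}(\mathcal B^\gamma)^n Q$ for every $Q\in\mathcal Q$; (3) when $\gamma=\gamma_{\mathrm{epi}}$, the fixed point $Q^*$ of $\mathcal B^{\gamma_{\mathrm{epi}}}$ is an optimal Q-function: every policy $\pi^*$ with $\pi^*(a|s)>0$ only if $Q^*(s,a)=\max_{\bar a}Q^*(s,\bar a)$ satisfies $J(\pi^* )=\max_\pi J(\pi)$.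
   Context: A finite Episodic Learning Process (ELP) is a tuple $(\mathcal S,\mathcal A,P,R,\rho)$ with finite state space $\mathcal S$, finite action space $\mathcal A$, reward function $R:\mathcal S\to\mathbb R$, transition probabilities $P(s'|s,a)$, distribution $\rho$ on $\mathcal S$, and a nonempty set of terminal states $\mathcal S_\bot\subseteq\mathcal S$. A policy $\pi$ assigns to each $s$ a distribution $\pi(\cdot|s)$ on $\mathcal A$. Running $\pi$ gives a process $S_0,A_0,S_1,A_1,\dots$ with $S_0$ a fixed terminal state, $A_t\sim\pi(\cdot|S_t)$, $S_{t+1}\sim P(\cdot|S_t,A_t)$; write $\mathbb P_\pi,\mathbb E_\pi$. The termination time is $T=\inf\{t\ge1:S_t\in\mathcal S_\bot\}$. The ELP conditions are: (i) $\mathbb E_\pi[T]<\infty$ for every policy $\pi$; (ii) $P(s'|s,a)=\rho(s')$ for all $s\in\mathcal S_\bot$, $a\in\mathcal A$, $s'\in\mathcal S$; (iii) every state of $\mathcal S$ is reachable, i.e. for each $s$ there exist a policy $\pi$ and $t\ge1$ with $\mathbb P_\pi(S_t=s)>0$. The objective is $J(\pi)=\mathbb E_\pi[\sum_{t=1}^T R(S_t)]$; a policy is optimal if it maximizes $J$ over all policies. $\mathcal Q$ denotes the set of all functions $Q:\mathcal S\times\mathcal A\to\mathbb R$. For $\gamma:\mathcal S\to[0,1]$, the generalized Bellman optimality operator is $\mathcal B^\gamma Q(s,a)=\sum_{s'\in\mathcal S}P(s'|s,a)\big(R(s')+\gamma(s')\max_{a'\in\mathcal A}Q(s',a')\big)$.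 The episodic discounting function is $\gamma_{\mathrm{epi}}(s)=1$ if $s\notin\mathcal S_\bot$ and $0$ if $s\in\mathcal S_\bot$. A Q-function $Q$ is an optimal Q-function if every $Q$-greedy policy (one with $\pi(a|s)>0$ only if $Q(s,a)=\max_{\bar a}Q(s,\bar a)$) is optimal. *)

theory Defs
  imports "HOL-Analysis.Analysis"
begin

text \<open>Finite ELP with state type 's::finite and action type 'a::finite.
  Transition kernel P s a s' = P(s'|s,a); policy pol s a = pol(a|s).\<close>

definition is_policy :: "('s::finite \<Rightarrow> 'a::finite \<Rightarrow> real) \<Rightarrow> bool" where
  "is_policy pol \<longleftrightarrow> (\<forall>s a. 0 \<le> pol s a) \<and> (\<forall>s. (\<Sum>a\<in>UNIV. pol s a) = 1)"

definition trans_pol :: "('s::finite \<Rightarrow> 'a::finite \<Rightarrow> 's \<Rightarrow> real) \<Rightarrow> ('s \<Rightarrow> 'a \<Rightarrow> real) \<Rightarrow> 's \<Rightarrow> 's \<Rightarrow> real" where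
  "trans_pol P pol s s' = (\<Sum>a\<in>UNIV. pol s a * P s a s')"

fun state_dist :: "('s::finite \<Rightarrow> 'a::finite \<Rightarrow> 's \<Rightarrow> real) \<Rightarrow> ('s \<Rightarrow> 'a \<Rightarrow> real) \<Rightarrow> 's \<Rightarrow> nat \<Rightarrow> 's \<Rightarrow> real" where
  "state_dist P pol s0 0 s = (if s = s0 then 1 else 0)"
| "state_dist P pol s0 (Suc t) s' = (\<Sum>s\<in>UNIV. state_dist P pol s0 t s * trans_pol P pol s s')"

text \<open>surv_dist P pol s0 Sbot t s = P_pi(S_t = s and S_u \<notin> Sbot for all 1 \<le> u < t);
  for t \<ge> 1 this is P_pi(S_t = s, T \<ge> t).\<close>
fun surv_dist :: "('s::finite \<Rightarrow> 'a::finite \<Rightarrow> 's \<Rightarrow> real) \<Rightarrow> ('s \<Rightarrow> 'a \<Rightarrow> real) \<Rightarrow> 's \<Rightarrow> 's set \<Rightarrow> nat \<Rightarrow> 's \<Rightarrow> real" where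
  "surv_dist P pol s0 Sbot 0 s = (if s = s0 then 1 else 0)"
| "surv_dist P pol s0 Sbot (Suc t) s' =
     (\<Sum>s\<in>UNIV. (if 1 \<le> t \<and> s \<in> Sbot then 0 else surv_dist P pol s0 Sbot t s) * trans_pol P pol s s')"

text \<open>E_pi[T] < infinity, where E[T] = sum_{t>=1} P(T >= t).\<close>
definition finite_exp_term :: "('s::finite \<Rightarrow> 'a::finite \<Rightarrow> 's \<Rightarrow> real) \<Rightarrow> ('s \<Rightarrow> 'a \<Rightarrow> real) \<Rightarrow> 's \<Rightarrow> 's set \<Rightarrow> bool" where
  "finite_exp_term P pol s0 Sbot \<longleftrightarrow> summable (\<lambda>t. \<Sum>s\<in>UNIV. surv_dist P pol s0 Sbot (Suc t) s)"

text \<open>J(pol) = E_pi[sum_{t=1}^T R(S_t)] = sum_{t>=1} sum_s P(S_t = s, T >= t) R(s).\<close>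
definition Jval :: "('s::finite \<Rightarrow> 'a::finite \<Rightarrow> 's \<Rightarrow> real) \<Rightarrow> ('s \<Rightarrow> real) \<Rightarrow> 's \<Rightarrow> 's set \<Rightarrow> ('s \<Rightarrow> 'a \<Rightarrow> real) \<Rightarrow> real" where
  "Jval P R s0 Sbot pol = (\<Sum>t. \<Sum>s\<in>UNIV. surv_dist P pol s0 Sbot (Suc t) s * R s)"

definition is_ELP :: "('s::finite \<Rightarrow> 'a::finite \<Rightarrow> 's \<Rightarrow> real) \<Rightarrow> ('s \<Rightarrow> real) \<Rightarrow> 's set \<Rightarrow> 's \<Rightarrow> bool" where
  "is_ELP P rho Sbot s0 \<longleftrightarrow>
     (\<forall>s a s'. 0 \<le> P s a s') \<and> (\<forall>s a. (\<Sum>s'\<in>UNIV. P s a s') = 1) \<and>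
     (\<forall>s. 0 \<le> rho s) \<and> (\<Sum>s\<in>UNIV. rho s) = 1 \<and>
     Sbot \<noteq> {} \<and> s0 \<in> Sbot \<and>
     (\<forall>pol. is_policy pol \<longrightarrow> finite_exp_term P pol s0 Sbot) \<and>
     (\<forall>s\<in>Sbot. \<forall>a s'. P s a s' = rho s') \<and>
     (\<forall>s. \<exists>pol t. is_policy pol \<and> 1 \<le> t \<and> state_dist P pol s0 t s > 0)"

definition bellman :: "('s::finite \<Rightarrow> 'a::finite \<Rightarrow> 's \<Rightarrow> real) \<Rightarrow> ('s \<Rightarrow> real) \<Rightarrow> ('s \<Rightarrow> real) \<Rightarrow> ('s \<Rightarrow> 'a \<Rightarrow> real) \<Rightarrow> ('s \<Rightarrow> 'a \<Rightarrow> real)" where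
  "bellman P R \<gamma> Q s a = (\<Sum>s'\<in>UNIV. P s a s' * (R s' + \<gamma> s' * (MAX a'. Q s' a')))"

definition gamma_epi :: "'s set \<Rightarrow> 's \<Rightarrow> real" where
  "gamma_epi Sbot s = (if s \<in> Sbot then 0 else 1)"

definition greedy :: "('s::finite \<Rightarrow> 'a::finite \<Rightarrow> real) \<Rightarrow> ('s \<Rightarrow> 'a \<Rightarrow> real) \<Rightarrow> bool" where
  "greedy Q pol \<longleftrightarrow> (\<forall>s a. pol s a > 0 \<longrightarrow> Q s a = (MAX b. Q s b))"

end

theory Submission
  imports Defs
begin


definition Dm :: "('s::finite \<Rightarrow> 'a::finite \<Rightarrow> real) \<Rightarrow> ('s \<Rightarrow> 'a \<Rightarrow> real) \<Rightarrow> 's \<Rightarrow> real" where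
  "Dm Q1 Q2 s = (MAX a. \<bar>Q1 s a - Q2 s a\<bar>)"

definition Hop :: "('s::finite \<Rightarrow> 'a::finite \<Rightarrow> 's \<Rightarrow> real) \<Rightarrow> ('s \<Rightarrow> real) \<Rightarrow> ('s \<Rightarrow> real) \<Rightarrow> 's \<Rightarrow> real" where
  "Hop P \<gamma> d s = (MAX a. \<Sum>s'\<in>UNIV. P s a s' * \<gamma> s' * d s')"

fun hseq :: "('s::finite \<Rightarrow> 'a::finite \<Rightarrow> 's \<Rightarrow> real) \<Rightarrow> ('s \<Rightarrow> real) \<Rightarrow> nat \<Rightarrow> 's \<Rightarrow> real" where
  "hseq P \<gamma> 0 s = 1"
| "hseq P \<gamma> (Suc n) s = Hop P \<gamma> (hseq P \<gamma> n) s"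

lemma Max_range_ge: "f x \<le> (MAX a. f (a::'a::finite))"
  by (rule Max_ge) auto

lemma Max_range_le_iff: "(MAX a. f (a::'a::finite)) \<le> c \<longleftrightarrow> (\<forall>a. f a \<le> c)"
  by (subst Max_le_iff) auto

lemma Max_range_less_iff: "(MAX a. f (a::'a::finite)) < c \<longleftrightarrow> (\<forall>a. f a < c)"
  by (subst Max_less_iff) auto

lemma Max_range_obtain: obtains x where "(MAX a. f (a::'a::finite)) = f x"
proof -
  have "(MAX a. f a) \<in> range f" by (rule Max_in) auto
  then obtain x where "(MAX a. f a) = f x" by blast
  then show ?thesis by (rule that)
qed

lemma max_diff: fixes f g :: "'a::finite \<Rightarrow> real" shows "\<bar>(MAX a. f a) - (MAX a. g a)\<bar> \<le> (MAX a. \<bar>f a - g a\<bar>)"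
proof -
  obtain x where x: "(MAX a. f a) = f x" by (rule Max_range_obtain)
  obtain y where y: "(MAX a. g a) = g y" by (rule Max_range_obtain)
  have "f x - g x \<le> (MAX a. \<bar>f a - g a\<bar>)"
    using Max_range_ge[of "\<lambda>a. \<bar>f a - g a\<bar>" x] abs_ge_self[of "f x - g x"] by linarith
  moreover have "g y - f y \<le> (MAX a. \<bar>f a - g a\<bar>)"
    using Max_range_ge[of "\<lambda>a. \<bar>f a - g a\<bar>" y] abs_ge_self[of "g y - f y"] abs_minus_commute[of "f y" "g y"] by linarith
  moreover have "g x \<le> g y" using y Max_range_ge[of g x] by simp
  moreover have "f y \<le> f x" using x Max_range_ge[of f y] by simp
  ultimately show ?thesis using x y by linarith
qed

lemma Dm_nonneg: "0 \<le> Dm Q1 Q2 s"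
  unfolding Dm_def by (rule order.trans[OF _ Max_range_ge]) auto

lemma Dm_ge: "\<bar>Q1 s a - Q2 s a\<bar> \<le> Dm Q1 Q2 s"
  unfolding Dm_def by (rule Max_range_ge)

locale mdp =
  fixes P :: "'s::finite \<Rightarrow> 'a::finite \<Rightarrow> 's \<Rightarrow> real" and \<gamma> :: "'s \<Rightarrow> real"
  assumes Pnn: "\<And>s a s'. 0 \<le> P s a s'" and Psum: "\<And>s a. (\<Sum>s'\<in>UNIV. P s a s') = 1"
    and gnn: "\<And>s. 0 \<le> \<gamma> s" and gle: "\<And>s. \<gamma> s \<le> 1"
begin

lemma bellman_diff:
  "\<bar>bellman P R \<gamma> Q1 s a - bellman P R \<gamma> Q2 s a\<bar> \<le> (\<Sum>s'\<in>UNIV. P s a s' * \<gamma> s' * Dm Q1 Q2 s')"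
proof -
  have "bellman P R \<gamma> Q1 s a - bellman P R \<gamma> Q2 s a
     = (\<Sum>s'\<in>UNIV. P s a s' * \<gamma> s' * ((MAX a'. Q1 s' a') - (MAX a'. Q2 s' a')))"
    unfolding bellman_def sum_subtractf[symmetric] by (rule sum.cong) (auto simp: algebra_simps)
  also have "\<bar>\<dots>\<bar> \<le> (\<Sum>s'\<in>UNIV. \<bar>P s a s' * \<gamma> s' * ((MAX a'. Q1 s' a') - (MAX a'. Q2 s' a'))\<bar>)"
    by (rule sum_abs)
  also have "\<dots> \<le> (\<Sum>s'\<in>UNIV. P s a s' * \<gamma> s' * Dm Q1 Q2 s')"
  proof (rule sum_mono)
    fix s' 
    have "0 \<le> P s a s' * \<gamma> s'" using Pnn gnn by simp
    then show "\<bar>P s a s' * \<gamma> s' * ((MAX a'. Q1 s' a') - (MAX a'. Q2 s' a'))\<bar> \<le> P s a s' * \<gamma> s' * Dm Q1 Q2 s'"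
      unfolding abs_mult Dm_def using max_diff[of "Q1 s'" "Q2 s'"]
      by (simp add: mult_left_mono abs_of_nonneg Pnn gnn)
  qed
  finally show ?thesis .
qed

lemma Hop_mono: assumes "\<And>s. d s \<le> e s" shows "Hop P \<gamma> d s \<le> Hop P \<gamma> e s"
  unfolding Hop_def Max_range_le_iff
proof
  fix a
  have "(\<Sum>s'\<in>UNIV. P s a s' * \<gamma> s' * d s') \<le> (\<Sum>s'\<in>UNIV. P s a s' * \<gamma> s' * e s')"
    by (rule sum_mono) (simp add: assms mult_left_mono Pnn gnn)
  also have "\<dots> \<le> (MAX a. \<Sum>s'\<in>UNIV. P s a s' * \<gamma> s' * e s')" by (rule Max_range_ge)
  finally show "(\<Sum>s'\<in>UNIV. P s a s' * \<gamma> s' * d s') \<le> (MAX a. \<Sum>s'\<in>UNIV. P s a s' * \<gamma> s' * e s')" .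
qed

lemma Hop_scale: assumes "0 \<le> m" shows "Hop P \<gamma> (\<lambda>s. m * d s) s \<le> m * Hop P \<gamma> d s"
  unfolding Hop_def Max_range_le_iff
proof
  fix a
  have "(\<Sum>s'\<in>UNIV. P s a s' * \<gamma> s' * (m * d s')) = m * (\<Sum>s'\<in>UNIV. P s a s' * \<gamma> s' * d s')"
    by (simp add: sum_distrib_left algebra_simps)
  also have "\<dots> \<le> m * (MAX a. \<Sum>s'\<in>UNIV. P s a s' * \<gamma> s' * d s')"
    by (rule mult_left_mono[OF Max_range_ge assms])
  finally show "(\<Sum>s'\<in>UNIV. P s a s' * \<gamma> s' * (m * d s')) \<le> m * (MAX a. \<Sum>s'\<in>UNIV. P s a s' * \<gamma> s' * d s')" .
qed

lemma Dm_bellman: "Dm (bellman P R \<gamma> Q1) (bellman P R \<gamma> Q2) s \<le> Hop P \<gamma> (Dm Q1 Q2) s"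
  unfolding Dm_def[of "bellman P R \<gamma> Q1"] Max_range_le_iff
proof
  fix a
  show "\<bar>bellman P R \<gamma> Q1 s a - bellman P R \<gamma> Q2 s a\<bar> \<le> Hop P \<gamma> (Dm Q1 Q2) s"
    using bellman_diff[of R Q1 s a Q2] Max_range_ge[of "\<lambda>a. \<Sum>s'\<in>UNIV. P s a s' * \<gamma> s' * Dm Q1 Q2 s'" a]
    unfolding Hop_def by linarith
qed

lemma hseq_bounds: "0 \<le> hseq P \<gamma> n s \<and> hseq P \<gamma> n s \<le> 1"
proof (induction n arbitrary: s)
  case 0 then show ?case by simp
next
  case (Suc n)
  have lo: "0 \<le> (\<Sum>s'\<in>UNIV. P s a s' * \<gamma> s' * hseq P \<gamma> n s')" for a
    by (rule sum_nonneg) (use Suc Pnn gnn in auto)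
  have "(\<Sum>s'\<in>UNIV. P s a s' * \<gamma> s' * hseq P \<gamma> n s') \<le> (\<Sum>s'\<in>UNIV. P s a s')" for a
  proof (rule sum_mono)
    fix s'
    have "\<gamma> s' * hseq P \<gamma> n s' \<le> 1" using Suc gle gnn by (meson mult_le_one)
    then show "P s a s' * \<gamma> s' * hseq P \<gamma> n s' \<le> P s a s'"
      using Pnn mult_left_mono[of "\<gamma> s' * hseq P \<gamma> n s'" 1 "P s a s'"] by (simp add: mult.assoc)
  qed
  then have hi: "(\<Sum>s'\<in>UNIV. P s a s' * \<gamma> s' * hseq P \<gamma> n s') \<le> 1" for a using Psum by metis
  show ?case
    using lo[of undefined] Max_range_ge[of "\<lambda>a. \<Sum>s'\<in>UNIV. P s a s' * \<gamma> s' * hseq P \<gamma> n s'" undefined] hi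
    by (auto simp: Hop_def Max_range_le_iff intro: order.trans)
qed

lemma hseq_Suc_le: "hseq P \<gamma> (Suc n) s \<le> hseq P \<gamma> n s"
proof (induction n arbitrary: s)
  case 0 then show ?case using hseq_bounds[of "Suc 0" s] by simp
next
  case (Suc n)
  show ?case using Hop_mono[of "hseq P \<gamma> (Suc n)" "hseq P \<gamma> n" s] Suc by simp
qed

lemma hseq_antimono: "m \<le> n \<Longrightarrow> hseq P \<gamma> n s \<le> hseq P \<gamma> m s"
proof (induction n rule: dec_induct)
  case base then show ?case by simp
next
  case (step n) then show ?case using hseq_Suc_le[of n s] by linarith
qed

lemma Dm_iter: "Dm ((bellman P R \<gamma> ^^ n) Q1) ((bellman P R \<gamma> ^^ n) Q2) s \<le> (MAX s. Dm Q1 Q2 s) * hseq P \<gamma> n s"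
proof (induction n arbitrary: s)
  case 0 then show ?case by (simp add: Max_range_ge)
next
  case (Suc n)
  let ?m = "MAX s. Dm Q1 Q2 s"
  have m0: "0 \<le> ?m" using Dm_nonneg Max_range_ge order.trans by metis
  have "Dm ((bellman P R \<gamma> ^^ Suc n) Q1) ((bellman P R \<gamma> ^^ Suc n) Q2) s
      \<le> Hop P \<gamma> (Dm ((bellman P R \<gamma> ^^ n) Q1) ((bellman P R \<gamma> ^^ n) Q2)) s"
    using Dm_bellman by simp
  also have "\<dots> \<le> Hop P \<gamma> (\<lambda>s. ?m * hseq P \<gamma> n s) s" by (rule Hop_mono) (rule Suc)
  also have "\<dots> \<le> ?m * hseq P \<gamma> (Suc n) s" using Hop_scale[OF m0] by simp
  finally show ?case .
qed

end



lemma sum_pos_ex: fixes f :: "'s::finite \<Rightarrow> real"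
  assumes "0 < (\<Sum>s\<in>UNIV. f s)" shows "\<exists>s. 0 < f s"
proof (rule ccontr)
  assume "\<not> ?thesis"
  then have "(\<Sum>s\<in>UNIV. f s) \<le> 0" by (intro sum_nonpos) (simp add: not_less)
  with assms show False by simp
qed

locale mdp_term = mdp P \<gamma> for P :: "'s::finite \<Rightarrow> 'a::finite \<Rightarrow> 's \<Rightarrow> real" and \<gamma> +
  fixes Sbot :: "'s set"
  assumes gterm: "\<And>s. s \<in> Sbot \<Longrightarrow> \<gamma> s < 1"
    and notrap: "\<And>M (f::'s \<Rightarrow> 'a). M \<noteq> {} \<Longrightarrow> M \<inter> Sbot = {} \<Longrightarrow> (\<forall>s\<in>M. \<forall>s'. 0 < P s (f s) s' \<longrightarrow> s' \<in> M) \<Longrightarrow> False"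
begin

lemma strict_avg:
  assumes "\<And>s'. x s' \<le> 1" "0 < P s a t" "x t < 1"
  shows "(\<Sum>s'\<in>UNIV. P s a s' * x s') < 1"
proof -
  have "(\<Sum>s'\<in>UNIV. P s a s' * x s') < (\<Sum>s'\<in>UNIV. P s a s')"
  proof (rule sum_strict_mono_ex1)
    show "\<forall>s'\<in>UNIV. P s a s' * x s' \<le> P s a s'"
      using assms(1) Pnn by (simp add: mult_left_le)
    show "\<exists>s'\<in>UNIV. P s a s' * x s' < P s a s'"
      using assms(2,3) by (intro bexI[of _ t]) auto
  qed simp
  then show ?thesis using Psum by simp
qed

lemma exists_N: "\<exists>N. \<forall>s. hseq P \<gamma> N s < 1"
proof -
  let ?h = "hseq P \<gamma>"
  have hb: "0 \<le> ?h n s \<and> ?h n s \<le> 1" for n s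
    using hseq_bounds .
  have hanti: "m \<le> n \<Longrightarrow> ?h n s \<le> ?h m s" for m n s
    using hseq_antimono .
  define M where "M = {s. \<forall>n. ?h n s = 1}"
  show ?thesis
  proof (cases "M = {}")
    case True
    then have "\<forall>s. \<exists>n. ?h n s < 1" using hb unfolding M_def by (force simp: less_le)
    then obtain nf where nf: "\<And>s. ?h (nf s) s < 1" by metis
    define N where "N = (MAX s. nf s)"
    have "?h N s < 1" for s
      using hanti[of "nf s" N s] nf[of s] Max_range_ge[of nf s] unfolding N_def by linarith
    then show ?thesis by blast
  next
    case False
    have key: "\<exists>a. \<forall>s'. 0 < P s a s' \<longrightarrow> \<gamma> s' = 1 \<and> s' \<in> M" if sM: "s \<in> M" for s
    proof (rule ccontr)
      assume "\<not> ?thesis"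
      then have "\<forall>a. \<exists>s' n. 0 < P s a s' \<and> \<gamma> s' * ?h n s' < 1"
      proof (intro allI)
        fix a
        assume "\<not> (\<exists>a. \<forall>s'. 0 < P s a s' \<longrightarrow> \<gamma> s' = 1 \<and> s' \<in> M)"
        then obtain s' where s': "0 < P s a s'" "\<gamma> s' \<noteq> 1 \<or> s' \<notin> M" by blast
        show "\<exists>s' n. 0 < P s a s' \<and> \<gamma> s' * ?h n s' < 1"
        proof (cases "\<gamma> s' = 1")
          case False
          then have "\<gamma> s' * ?h 0 s' < 1" using gle[of s'] by simp
          then show ?thesis using s' by blast
        next
          case True
          then obtain n where "?h n s' \<noteq> 1" using s' unfolding M_def by blast
          then have "\<gamma> s' * ?h n s' < 1" using True hb[of n s'] by simp
          then show ?thesis using s' by blast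
        qed
      qed
      then obtain tf nf where tf: "\<And>a. 0 < P s a (tf a) \<and> \<gamma> (tf a) * ?h (nf a) (tf a) < 1" by metis
      define N where "N = (MAX a. nf a)"
      have "(\<Sum>s'\<in>UNIV. P s a s' * \<gamma> s' * ?h N s') < 1" for a
      proof -
        have "\<gamma> (tf a) * ?h N (tf a) \<le> \<gamma> (tf a) * ?h (nf a) (tf a)"
          using hanti[of "nf a" N] Max_range_ge[of nf a] gnn unfolding N_def
          by (simp add: mult_left_mono)
        then have "(\<Sum>s'\<in>UNIV. P s a s' * (\<gamma> s' * ?h N s')) < 1"
          using tf[of a] hb gle gnn
          by (intro strict_avg[of "\<lambda>s'. \<gamma> s' * ?h N s'" s a "tf a"]) (auto intro: mult_le_one)
        then show ?thesis by (simp add: mult.assoc)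
      qed
      then have "?h (Suc N) s < 1" by (simp add: Hop_def Max_range_less_iff)
      moreover have "?h (Suc N) s = 1" using sM unfolding M_def by blast
      ultimately show False by simp
    qed
    define f where "f s = (SOME a. \<forall>s'. 0 < P s a s' \<longrightarrow> \<gamma> s' = 1 \<and> s' \<in> M)" for s
    have fprop0: "\<forall>s'. 0 < P s (f s) s' \<longrightarrow> \<gamma> s' = 1 \<and> s' \<in> M" if "s \<in> M" for s
      unfolding f_def by (rule someI_ex[OF key[OF that]])
    have fprop: "\<And>s s'. s \<in> M \<Longrightarrow> 0 < P s (f s) s' \<Longrightarrow> \<gamma> s' = 1 \<and> s' \<in> M"
      using fprop0 by blast
    have notbot: "\<gamma> s' = 1 \<Longrightarrow> s' \<notin> Sbot" for s' using gterm by force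
    define M2 where "M2 = M - Sbot"
    obtain s where s: "s \<in> M" using False by blast
    obtain s' where s': "0 < P s (f s) s'" using sum_pos_ex[of "P s (f s)"] Psum by auto
    have "s' \<in> M2" using fprop[OF s s'] notbot unfolding M2_def by blast
    then have "M2 \<noteq> {}" by blast
    moreover have "M2 \<inter> Sbot = {}" unfolding M2_def by blast
    moreover have "\<forall>s\<in>M2. \<forall>s'. 0 < P s (f s) s' \<longrightarrow> s' \<in> M2"
      using fprop notbot unfolding M2_def by blast
    ultimately show ?thesis using notrap by blast
  qed
qed

end



lemma funpow_add': "(f ^^ (k + m)) x = (f ^^ k) ((f ^^ m) x)"
  by (simp add: funpow_add)

lemma Dm_le_sum: "Dm Q1 Q2 s \<le> (\<Sum>a\<in>UNIV. \<bar>Q1 s a - Q2 s a\<bar>)"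
  unfolding Dm_def Max_range_le_iff
  by (intro allI member_le_sum) auto

context mdp begin
context
  fixes R :: "'s \<Rightarrow> real" and N :: nat
  assumes hN: "\<And>s. hseq P \<gamma> N s < 1"
begin

abbreviation "BB \<equiv> bellman P R \<gamma>"

lemma cdef: "0 \<le> (MAX s. hseq P \<gamma> N s) \<and> (MAX s. hseq P \<gamma> N s) < 1"
  using hseq_bounds[where n=N] hN
  by (auto simp: Max_range_less_iff intro: order.trans[OF _ Max_range_ge])

lemma N_pos: "0 < N"
  using hN[of undefined] by (cases N) auto

lemma fix_iter: "BB Q = Q \<Longrightarrow> (BB ^^ n) Q = Q"
  by (induction n) auto

lemma uniq: assumes "BB Q1 = Q1" "BB Q2 = Q2" shows "Q1 = Q2"
proof -
  let ?c = "MAX s. hseq P \<gamma> N s"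
  let ?m = "MAX s. Dm Q1 Q2 s"
  obtain s0 where s0: "?m = Dm Q1 Q2 s0" by (rule Max_range_obtain)
  have "Dm ((BB ^^ N) Q1) ((BB ^^ N) Q2) s0 \<le> ?m * hseq P \<gamma> N s0"
    by (rule Dm_iter)
  then have "Dm Q1 Q2 s0 \<le> ?m * hseq P \<gamma> N s0"
    unfolding fix_iter[OF assms(1)] fix_iter[OF assms(2)] .
  also have "\<dots> \<le> ?m * ?c"
    by (rule mult_left_mono[OF Max_range_ge]) (use Dm_nonneg s0 in metis)
  finally have "?m \<le> ?m * ?c" using s0 by simp
  then have "?m \<le> 0" using cdef
    by (metis mult_le_cancel_left1 not_le)
  then have "\<bar>Q1 s a - Q2 s a\<bar> \<le> 0" for s a
    using Dm_ge[of Q1 s a Q2] Max_range_ge[of "Dm Q1 Q2" s] by linarith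
  then show ?thesis by (intro ext) auto
qed

lemma conv: "\<exists>L. BB L = L \<and> (\<forall>s a. (\<lambda>n. (BB ^^ n) Q0 s a) \<longlonglongrightarrow> L s a)"
proof -
  define Q where "Q n = (BB ^^ n) Q0" for n
  define e where "e n = (MAX s. Dm (Q (Suc n)) (Q n) s)" for n
  let ?c = "MAX s. hseq P \<gamma> N s"
  have e0: "0 \<le> e n" for n
    unfolding e_def by (rule order.trans[OF Dm_nonneg Max_range_ge])
  have estep: "e (k + n) \<le> e n * (MAX s. hseq P \<gamma> k s)" for k n
    unfolding e_def[of "k+n"] Max_range_le_iff
  proof
    fix s
    have QQ: "Q (Suc (k + n)) = (BB ^^ k) (Q (Suc n))" "Q (k + n) = (BB ^^ k) (Q n)"
      unfolding Q_def funpow_add'[symmetric] by simp_all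
    have "Dm (Q (Suc (k + n))) (Q (k + n)) s \<le> e n * hseq P \<gamma> k s"
      unfolding QQ e_def by (rule Dm_iter)
    also have "\<dots> \<le> e n * (MAX s. hseq P \<gamma> k s)"
      by (rule mult_left_mono[OF Max_range_ge e0])
    finally show "Dm (Q (Suc (k + n))) (Q (k + n)) s \<le> e n * (MAX s. hseq P \<gamma> k s)" .
  qed
  have e1: "e (Suc n) \<le> e n" for n
  proof -
    have "(MAX s. hseq P \<gamma> 1 s) \<le> 1"
      using hseq_bounds[where n=1] by (simp add: Max_range_le_iff del: hseq.simps)
    then have "e n * (MAX s. hseq P \<gamma> 1 s) \<le> e n * 1" by (rule mult_left_mono[OF _ e0])
    then show ?thesis using estep[of 1 n] by simp
  qed
  have eN: "e (N + n) \<le> ?c * e n" for n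
    using estep[of N n] by (simp add: mult.commute)
  have emono: "e n \<le> e 0" for n
  proof (induction n)
    case (Suc n) then show ?case using e1[of n] by linarith
  qed simp
  have ej: "e (j * N + r) \<le> ?c ^ j * e 0" for j r
  proof (induction j)
    case 0 then show ?case using emono by simp
  next
    case (Suc j)
    have "e (Suc j * N + r) = e (N + (j * N + r))" by (simp add: add.assoc)
    also have "\<dots> \<le> ?c * e (j * N + r)" by (rule eN)
    also have "\<dots> \<le> ?c * (?c ^ j * e 0)" by (rule mult_left_mono[OF Suc]) (use cdef in simp)
    finally show ?case by simp
  qed
  define c' where "c' = max ?c (1/2)"
  define q where "q = root N c'"
  have c'pos: "0 < c'" "c' < 1" "?c \<le> c'" using cdef unfolding c'_def by auto
  have qpos: "0 < q" "q < 1" "q ^ N = c'"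
    using c'pos N_pos unfolding q_def by (auto intro: real_root_gt_zero)
  have ebound: "e n \<le> (e 0 / c') * q ^ n" for n
  proof -
    have n: "n = (n div N) * N + n mod N" by simp
    have "e n \<le> ?c ^ (n div N) * e 0" using ej[of "n div N" "n mod N"] n by metis
    also have "\<dots> \<le> c' ^ (n div N) * e 0"
      by (intro mult_right_mono power_mono) (use cdef c'pos e0 in auto)
    also have "c' ^ (n div N) = q ^ (N * (n div N))" using qpos by (simp add: power_mult)
    also have "q ^ (N * (n div N)) * c' \<le> q ^ n"
    proof -
      have "q ^ N \<le> q ^ (n mod N)"
        using qpos N_pos by (intro power_decreasing) auto
      then have "q ^ (N * (n div N)) * q ^ N \<le> q ^ (N * (n div N)) * q ^ (n mod N)"
        using qpos by (intro mult_left_mono) auto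
      also have "\<dots> = q ^ n" by (metis power_add mult.commute div_mult_mod_eq)
      finally show ?thesis using qpos by simp
    qed
    then have "q ^ (N * (n div N)) \<le> q ^ n / c'" using c'pos by (simp add: field_simps)
    then have "q ^ (N * (n div N)) * e 0 \<le> q ^ n / c' * e 0" by (rule mult_right_mono[OF _ e0])
    finally show ?thesis by (simp add: mult.commute)
  qed
  have sumg: "summable (\<lambda>n. (e 0 / c') * q ^ n)"
    using qpos by (intro summable_mult summable_geometric) auto
  have "\<exists>l. (\<lambda>n. Q n s a) \<longlonglongrightarrow> l" for s a
  proof -
    have "summable (\<lambda>n. Q (Suc n) s a - Q n s a)"
    proof (rule summable_comparison_test'[OF sumg])
      fix n
      have "\<bar>Q (Suc n) s a - Q n s a\<bar> \<le> e n"
        unfolding e_def using Dm_ge[of "Q (Suc n)" s a "Q n"] Max_range_ge[of "Dm (Q (Suc n)) (Q n)" s] by linarith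
      then show "norm (Q (Suc n) s a - Q n s a) \<le> e 0 / c' * q ^ n" using ebound[of n] by simp
    qed
    then obtain l where "(\<lambda>n. \<Sum>i<n. Q (Suc i) s a - Q i s a) \<longlonglongrightarrow> l"
      unfolding summable_def sums_def by blast
    then have "(\<lambda>n. Q n s a - Q 0 s a) \<longlonglongrightarrow> l" using sum_lessThan_telescope[of "\<lambda>i. Q i s a"] by simp
    then have "(\<lambda>n. (Q n s a - Q 0 s a) + Q 0 s a) \<longlonglongrightarrow> l + Q 0 s a" by (intro tendsto_add) auto
    then show ?thesis by auto
  qed
  then obtain L where L: "\<And>s a. (\<lambda>n. Q n s a) \<longlonglongrightarrow> L s a" by metis
  have "BB L s a = L s a" for s a
  proof -
    have 1: "(\<lambda>n. BB (Q n) s a) \<longlonglongrightarrow> L s a"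
      using LIMSEQ_Suc[OF L[of s a]] unfolding Q_def by simp
    let ?g = "\<lambda>n. \<Sum>s'\<in>UNIV. P s a s' * \<gamma> s' * (\<Sum>a'\<in>UNIV. \<bar>Q n s' a' - L s' a'\<bar>)"
    have g0: "?g \<longlonglongrightarrow> (\<Sum>s'\<in>UNIV. P s a s' * \<gamma> s' * (\<Sum>a'\<in>UNIV. \<bar>L s' a' - L s' a'\<bar>))"
      by (intro tendsto_intros L)
    have "(\<lambda>n. BB (Q n) s a - BB L s a) \<longlonglongrightarrow> 0"
    proof (rule Lim_null_comparison)
      show "\<forall>\<^sub>F n in sequentially. norm (BB (Q n) s a - BB L s a) \<le> ?g n"
      proof (intro always_eventually allI)
        fix n
        have "norm (BB (Q n) s a - BB L s a) \<le> (\<Sum>s'\<in>UNIV. P s a s' * \<gamma> s' * Dm (Q n) L s')"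
          using bellman_diff by simp
        also have "\<dots> \<le> ?g n"
          by (intro sum_mono mult_left_mono Dm_le_sum) (use Pnn gnn in simp)
        finally show "norm (BB (Q n) s a - BB L s a) \<le> ?g n" .
      qed
      show "?g \<longlonglongrightarrow> 0" using g0 by simp
    qed
    then have "(\<lambda>n. BB (Q n) s a) \<longlonglongrightarrow> BB L s a" by (simp add: LIM_zero_iff)
    then show ?thesis using 1 LIMSEQ_unique by blast
  qed
  then have "BB L = L" by (intro ext)
  then show ?thesis using L unfolding Q_def by blast
qed

end
end



context
  fixes P :: "'s::finite \<Rightarrow> 'a::finite \<Rightarrow> 's \<Rightarrow> real" and rho :: "'s \<Rightarrow> real"
    and Sbot :: "'s set" and s0 :: 's
  assumes elp: "is_ELP P rho Sbot s0"
begin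

lemma ePnn: "0 \<le> P s a s'" using elp unfolding is_ELP_def by blast
lemma ePsum: "(\<Sum>s'\<in>UNIV. P s a s') = 1" using elp unfolding is_ELP_def by blast
lemma s0bot: "s0 \<in> Sbot" using elp unfolding is_ELP_def by blast
lemma Pbot: "s \<in> Sbot \<Longrightarrow> P s a s' = rho s'" using elp unfolding is_ELP_def by blast
lemma fet: "is_policy pol \<Longrightarrow> finite_exp_term P pol s0 Sbot" using elp unfolding is_ELP_def by blast
lemma reach: "\<exists>pol t. is_policy pol \<and> 1 \<le> t \<and> state_dist P pol s0 t s > 0"
  using elp unfolding is_ELP_def by blast

lemma trans_nn: "is_policy pol \<Longrightarrow> 0 \<le> trans_pol P pol s s'"
  unfolding trans_pol_def is_policy_def by (intro sum_nonneg) (simp add: ePnn)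

lemma trans_bot: "is_policy pol \<Longrightarrow> s \<in> Sbot \<Longrightarrow> trans_pol P pol s s' = rho s'"
  unfolding trans_pol_def is_policy_def by (simp add: Pbot sum_distrib_right[symmetric])

lemma surv_nn: "is_policy pol \<Longrightarrow> 0 \<le> surv_dist P pol s0 Sbot t s"
proof (induction t arbitrary: s)
  case (Suc t) then show ?case by (simp, intro sum_nonneg) (simp add: trans_nn)
qed simp

lemma state_nn: "is_policy pol \<Longrightarrow> 0 \<le> state_dist P pol s0 t s"
proof (induction t arbitrary: s)
  case (Suc t) then show ?case by (simp, intro sum_nonneg) (simp add: trans_nn)
qed simp

lemma delta_sum: "(\<Sum>x\<in>UNIV. (if x = s0 then 1 else 0) * (g x::real)) = g s0"
  by (simp add: if_distrib[of "\<lambda>c. c * _"] cong: if_cong)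

lemma surv_one: "is_policy pol \<Longrightarrow> surv_dist P pol s0 Sbot (Suc 0) s = rho s"
  using delta_sum[of "\<lambda>x. trans_pol P pol x s"] by (simp add: trans_bot s0bot)

lemma state_one: "is_policy pol \<Longrightarrow> state_dist P pol s0 (Suc 0) s = rho s"
  using delta_sum[of "\<lambda>x. trans_pol P pol x s"] by (simp add: trans_bot s0bot)

lemma surv_tends: "is_policy pol \<Longrightarrow> (\<lambda>t. \<Sum>s\<in>UNIV. surv_dist P pol s0 Sbot (Suc t) s) \<longlonglongrightarrow> 0"
  using fet unfolding finite_exp_term_def by (blast intro: summable_LIMSEQ_zero)

lemma no_trap:
  fixes M :: "'s set" and f :: "'s \<Rightarrow> 'a"
  assumes Mne: "M \<noteq> {}" and Mbot: "M \<inter> Sbot = {}" and closed: "\<forall>s\<in>M. \<forall>s'. 0 < P s (f s) s' \<longrightarrow> s' \<in> M"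
  shows False
proof -
  obtain sM where sM: "sM \<in> M" using Mne by blast
  obtain pol1 t1 where p1: "is_policy pol1" "1 \<le> t1" "state_dist P pol1 s0 t1 sM > 0"
    using reach by blast
  define pol where "pol s a = (if s \<in> M then (if a = f s then 1 else 0) else pol1 s a)" for s a
  have "(\<Sum>a\<in>UNIV. pol s a) = 1" for s
    by (cases "s \<in> M") (use p1(1) in \<open>auto simp: pol_def is_policy_def\<close>)
  then have pol: "is_policy pol"
    using p1(1) unfolding is_policy_def by (auto simp: pol_def)
  let ?sv = "\<lambda>t s. surv_dist P pol s0 Sbot t s"
  have svnn: "0 \<le> ?sv t s" for t s using surv_nn[OF pol] .
  have trM: "trans_pol P pol s s' = P s (f s) s'" if "s \<in> M" for s s'
  proof -
    have "trans_pol P pol s s' = (\<Sum>a\<in>UNIV. (if a = f s then P s a s' else 0))"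
      unfolding trans_pol_def pol_def using that by (intro sum.cong) auto
    also have "\<dots> = P s (f s) s'" by simp
    finally show ?thesis .
  qed
  have trnM: "trans_pol P pol s s' = trans_pol P pol1 s s'" if "s \<notin> M" for s s'
    using that unfolding trans_pol_def pol_def by simp
  have ex: "\<exists>u s. 1 \<le> u \<and> s \<in> M \<and> 0 < ?sv u s"
  proof (rule ccontr)
    assume H: "\<not> ?thesis"
    have "0 < state_dist P pol1 s0 t s \<Longrightarrow> \<exists>u\<ge>1. 0 < ?sv u s" if "1 \<le> t" for t s
      using that
    proof (induction t arbitrary: s)
      case 0 then show ?case by simp
    next
      case (Suc t s')
      show ?case
      proof (cases "t = 0")
        case True
        then show ?thesis using Suc.prems state_one[OF p1(1)] surv_one[OF pol]
          by (intro exI[of _ "Suc 0"]) auto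
      next
        case False
        have "0 < (\<Sum>s\<in>UNIV. state_dist P pol1 s0 t s * trans_pol P pol1 s s')"
          using Suc.prems by simp
        then obtain s where "0 < state_dist P pol1 s0 t s * trans_pol P pol1 s s'"
          using sum_pos_ex by blast
        then have pos: "0 < state_dist P pol1 s0 t s" "0 < trans_pol P pol1 s s'"
          using state_nn[OF p1(1), of t s] trans_nn[OF p1(1), of s s'] by (auto simp: zero_less_mult_iff)
        then obtain u where u: "1 \<le> u" "0 < ?sv u s" using Suc.IH False by force
        show ?thesis
        proof (cases "s \<in> Sbot")
          case True
          then show ?thesis using pos trans_bot[OF p1(1)] surv_one[OF pol]
            by (intro exI[of _ "Suc 0"]) auto
        next
          case nb: False
          have "s \<notin> M" using H u by blast
          then have tr: "trans_pol P pol s s' = trans_pol P pol1 s s'" by (rule trnM)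
          have "?sv u s * trans_pol P pol s s'
              \<le> (\<Sum>x\<in>UNIV. (if 1 \<le> u \<and> x \<in> Sbot then 0 else ?sv u x) * trans_pol P pol x s')"
            using member_le_sum[of s UNIV "\<lambda>x. (if 1 \<le> u \<and> x \<in> Sbot then 0 else ?sv u x) * trans_pol P pol x s'"]
              nb svnn trans_nn[OF pol] by simp
          moreover have "0 < ?sv u s * trans_pol P pol s s'" using tr pos u by simp
          ultimately have "0 < ?sv (Suc u) s'" by simp
          then show ?thesis by (intro exI[of _ "Suc u"]) auto
        qed
      qed
    qed
    then obtain u where "1 \<le> u" "0 < ?sv u sM" using p1 by blast
    then show False using H sM by blast
  qed
  then obtain u sm where u: "1 \<le> u" "sm \<in> M" "0 < ?sv u sm" by blast
  have rowM: "(\<Sum>y\<in>M. P x (f x) y) = 1" if "x \<in> M" for x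
  proof -
    have "(\<Sum>y\<in>M. P x (f x) y) = (\<Sum>y\<in>UNIV. P x (f x) y)"
    proof (rule sum.mono_neutral_left)
      show "\<forall>i\<in>UNIV - M. P x (f x) i = 0"
        using closed that ePnn by (metis DiffD2 less_eq_real_def)
    qed auto
    then show ?thesis using ePsum by simp
  qed
  have mono: "(\<Sum>x\<in>M. ?sv t x) \<le> (\<Sum>y\<in>M. ?sv (Suc t) y)" if "1 \<le> t" for t
  proof -
    have "(\<Sum>x\<in>M. ?sv t x) = (\<Sum>x\<in>M. ?sv t x * (\<Sum>y\<in>M. trans_pol P pol x y))"
      by (rule sum.cong) (auto simp: trM rowM)
    also have "\<dots> = (\<Sum>x\<in>M. \<Sum>y\<in>M. ?sv t x * trans_pol P pol x y)"
      by (simp add: sum_distrib_left)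
    also have "\<dots> = (\<Sum>y\<in>M. \<Sum>x\<in>M. ?sv t x * trans_pol P pol x y)"
      by (rule sum.swap)
    also have "\<dots> = (\<Sum>y\<in>M. \<Sum>x\<in>M. (if 1 \<le> t \<and> x \<in> Sbot then 0 else ?sv t x) * trans_pol P pol x y)"
      using Mbot by (intro sum.cong refl) auto
    also have "\<dots> \<le> (\<Sum>y\<in>M. \<Sum>x\<in>UNIV. (if 1 \<le> t \<and> x \<in> Sbot then 0 else ?sv t x) * trans_pol P pol x y)"
      by (intro sum_mono sum_mono2) (auto simp: svnn trans_nn[OF pol])
    also have "\<dots> = (\<Sum>y\<in>M. ?sv (Suc t) y)" by simp
    finally show ?thesis .
  qed
  have mono2: "(\<Sum>x\<in>M. ?sv u x) \<le> (\<Sum>x\<in>M. ?sv (u + k) x)" for k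
  proof (induction k)
    case (Suc k) then show ?case using mono[of "u + k"] u by simp
  qed simp
  let ?c = "\<Sum>x\<in>M. ?sv u x"
  have cpos: "0 < ?c"
    using u member_le_sum[of sm M "?sv u"] svnn by force
  have "\<forall>\<^sub>F t in sequentially. (\<Sum>s\<in>UNIV. ?sv (Suc t) s) < ?c"
    using surv_tends[OF pol] cpos by (rule order_tendstoD)
  then obtain T where T: "\<And>t. t \<ge> T \<Longrightarrow> (\<Sum>s\<in>UNIV. ?sv (Suc t) s) < ?c"
    unfolding eventually_sequentially by blast
  have "(\<Sum>x\<in>M. ?sv (u + Suc T) x) \<le> (\<Sum>s\<in>UNIV. ?sv (u + Suc T) s)"
    by (intro sum_mono2) (auto simp del: surv_dist.simps intro: svnn)
  moreover have "u + Suc T = Suc (u + T)" by simp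
  ultimately show False using T[of "u + T"] mono2[of "Suc T"] by simp
qed

end



declare surv_dist.simps(2)[simp del]

definition Aseq where
  "Aseq P R Sbot s0 Qs pol k =
     (\<Sum>t<Suc k. \<Sum>s\<in>UNIV. surv_dist P pol s0 Sbot (Suc t) s * R s)
     + (\<Sum>s\<in>UNIV. surv_dist P pol s0 Sbot (Suc k) s * (gamma_epi Sbot s * (MAX a. Qs s a)))"

context
  fixes P :: "'s::finite \<Rightarrow> 'a::finite \<Rightarrow> 's \<Rightarrow> real" and rho :: "'s \<Rightarrow> real"
    and Sbot :: "'s set" and s0 :: 's and R :: "'s \<Rightarrow> real" and Qs :: "'s \<Rightarrow> 'a \<Rightarrow> real"
  assumes elp: "is_ELP P rho Sbot s0"
    and fixQ: "bellman P R (gamma_epi Sbot) Qs = Qs"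
begin

abbreviation "g \<equiv> gamma_epi Sbot"
abbreviation "W s \<equiv> R s + g s * (MAX a. Qs s a)"

lemma Qeq: "Qs s a = (\<Sum>s'\<in>UNIV. P s a s' * W s')"
  using fun_cong[OF fun_cong[OF fixQ, of s], of a] unfolding bellman_def by simp

lemma surv_step: "1 \<le> t \<Longrightarrow> surv_dist P pol s0 Sbot (Suc t) y
   = (\<Sum>x\<in>UNIV. g x * surv_dist P pol s0 Sbot t x * trans_pol P pol x y)"
  by (simp add: surv_dist.simps(2), intro sum.cong refl) (auto simp: gamma_epi_def)

lemma trW: "(\<Sum>y\<in>UNIV. trans_pol P pol x y * W y) = (\<Sum>a\<in>UNIV. pol x a * Qs x a)"
proof -
  have "(\<Sum>y\<in>UNIV. trans_pol P pol x y * W y) = (\<Sum>y\<in>UNIV. \<Sum>a\<in>UNIV. pol x a * (P x a y * W y))"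
    unfolding trans_pol_def by (simp add: sum_distrib_right mult.assoc)
  also have "\<dots> = (\<Sum>a\<in>UNIV. \<Sum>y\<in>UNIV. pol x a * (P x a y * W y))" by (rule sum.swap)
  also have "\<dots> = (\<Sum>a\<in>UNIV. pol x a * Qs x a)"
    by (simp add: sum_distrib_left[symmetric] Qeq[symmetric])
  finally show ?thesis .
qed

lemma key: "(\<Sum>y\<in>UNIV. surv_dist P pol s0 Sbot (Suc (Suc k)) y * W y)
  = (\<Sum>x\<in>UNIV. g x * surv_dist P pol s0 Sbot (Suc k) x * (\<Sum>a\<in>UNIV. pol x a * Qs x a))"
proof -
  let ?m = "\<lambda>x. g x * surv_dist P pol s0 Sbot (Suc k) x"
  have "(\<Sum>y\<in>UNIV. surv_dist P pol s0 Sbot (Suc (Suc k)) y * W y)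
      = (\<Sum>y\<in>UNIV. \<Sum>x\<in>UNIV. ?m x * (trans_pol P pol x y * W y))"
    using surv_step[of "Suc k" pol] by (simp add: sum_distrib_right mult.assoc)
  also have "\<dots> = (\<Sum>x\<in>UNIV. \<Sum>y\<in>UNIV. ?m x * (trans_pol P pol x y * W y))" by (rule sum.swap)
  also have "\<dots> = (\<Sum>x\<in>UNIV. ?m x * (\<Sum>a\<in>UNIV. pol x a * Qs x a))"
    by (simp add: sum_distrib_left[symmetric] trW)
  finally show ?thesis .
qed

lemma Z_le: "is_policy pol \<Longrightarrow> (\<Sum>a\<in>UNIV. pol x a * Qs x a) \<le> (MAX a. Qs x a)"
proof -
  assume p: "is_policy pol"
  have "(\<Sum>a\<in>UNIV. pol x a * Qs x a) \<le> (\<Sum>a\<in>UNIV. pol x a * (MAX a. Qs x a))"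
    using p unfolding is_policy_def by (intro sum_mono mult_left_mono Max_range_ge) auto
  also have "\<dots> = (MAX a. Qs x a)" using p unfolding is_policy_def by (simp add: sum_distrib_right[symmetric])
  finally show ?thesis .
qed

lemma Z_eq: "is_policy pol \<Longrightarrow> greedy Qs pol \<Longrightarrow> (\<Sum>a\<in>UNIV. pol x a * Qs x a) = (MAX a. Qs x a)"
proof -
  assume p: "is_policy pol" and gr: "greedy Qs pol"
  have "(\<Sum>a\<in>UNIV. pol x a * Qs x a) = (\<Sum>a\<in>UNIV. pol x a * (MAX a. Qs x a))"
  proof (rule sum.cong[OF refl])
    fix a
    show "pol x a * Qs x a = pol x a * (MAX a. Qs x a)"
    proof (cases "pol x a > 0")
      case True then show ?thesis using gr unfolding greedy_def by simp
    next
      case False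
      have "0 \<le> pol x a" using p unfolding is_policy_def by blast
      with False have "pol x a = 0" by linarith
      then show ?thesis by simp
    qed
  qed
  also have "\<dots> = (MAX a. Qs x a)" using p unfolding is_policy_def by (simp add: sum_distrib_right[symmetric])
  finally show ?thesis .
qed

definition "Jstar = (\<Sum>s\<in>UNIV. rho s * W s)"

lemma A0: "is_policy pol \<Longrightarrow> Aseq P R Sbot s0 Qs pol 0 = Jstar"
  unfolding Aseq_def Jstar_def using surv_one[OF elp]
  by (simp add: sum.distrib[symmetric] algebra_simps del: surv_dist.simps)

lemma Astep: "Aseq P R Sbot s0 Qs pol (Suc k) = Aseq P R Sbot s0 Qs pol k
   + (\<Sum>x\<in>UNIV. g x * surv_dist P pol s0 Sbot (Suc k) x * ((\<Sum>a\<in>UNIV. pol x a * Qs x a) - (MAX a. Qs x a)))"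
proof -
  let ?mu = "\<lambda>t s. surv_dist P pol s0 Sbot t s"
  have "Aseq P R Sbot s0 Qs pol (Suc k) = (\<Sum>t<Suc k. \<Sum>s\<in>UNIV. ?mu (Suc t) s * R s)
     + (\<Sum>y\<in>UNIV. ?mu (Suc (Suc k)) y * W y)"
    unfolding Aseq_def by (simp del: surv_dist.simps add: sum.distrib[symmetric] algebra_simps)
  also have "\<dots> = (\<Sum>t<Suc k. \<Sum>s\<in>UNIV. ?mu (Suc t) s * R s)
     + (\<Sum>x\<in>UNIV. g x * ?mu (Suc k) x * (\<Sum>a\<in>UNIV. pol x a * Qs x a))"
    by (simp only: key)
  also have "\<dots> = Aseq P R Sbot s0 Qs pol k
   + (\<Sum>x\<in>UNIV. g x * ?mu (Suc k) x * ((\<Sum>a\<in>UNIV. pol x a * Qs x a) - (MAX a. Qs x a)))"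
    unfolding Aseq_def by (simp del: surv_dist.simps add: sum_subtractf algebra_simps)
  finally show ?thesis .
qed

lemma A_le: "is_policy pol \<Longrightarrow> Aseq P R Sbot s0 Qs pol k \<le> Jstar"
proof (induction k)
  case 0 then show ?case using A0 by simp
next
  case (Suc k)
  have "(\<Sum>x\<in>UNIV. g x * surv_dist P pol s0 Sbot (Suc k) x * ((\<Sum>a\<in>UNIV. pol x a * Qs x a) - (MAX a. Qs x a))) \<le> 0"
  proof (rule sum_nonpos)
    fix x
    have "0 \<le> g x * surv_dist P pol s0 Sbot (Suc k) x"
      using surv_nn[OF elp Suc.prems] by (simp add: gamma_epi_def)
    moreover have "(\<Sum>a\<in>UNIV. pol x a * Qs x a) - (MAX a. Qs x a) \<le> 0" using Z_le[OF Suc.prems] by simp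
    ultimately show "g x * surv_dist P pol s0 Sbot (Suc k) x * ((\<Sum>a\<in>UNIV. pol x a * Qs x a) - (MAX a. Qs x a)) \<le> 0"
      by (simp add: mult_nonneg_nonpos)
  qed
  then show ?case using Astep[of pol k] Suc by linarith
qed

lemma A_eq: "is_policy pol \<Longrightarrow> greedy Qs pol \<Longrightarrow> Aseq P R Sbot s0 Qs pol k = Jstar"
proof (induction k)
  case 0 then show ?case using A0 by simp
next
  case (Suc k) then show ?case using Astep[of pol k] Z_eq by simp
qed

lemma A_lim: assumes p: "is_policy pol" shows "(\<lambda>k. Aseq P R Sbot s0 Qs pol k) \<longlonglongrightarrow> Jval P R s0 Sbot pol"
proof -
  let ?mu = "\<lambda>t s. surv_dist P pol s0 Sbot t s"
  have tot: "(\<lambda>t. \<Sum>s\<in>UNIV. ?mu (Suc t) s) \<longlonglongrightarrow> 0" by (rule surv_tends[OF elp p])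
  have summ: "summable (\<lambda>t. \<Sum>s\<in>UNIV. ?mu (Suc t) s)"
    using fet[OF elp p] unfolding finite_exp_term_def .
  have le_tot: "?mu (Suc t) s \<le> (\<Sum>s\<in>UNIV. ?mu (Suc t) s)" for t s
    by (rule member_le_sum) (auto intro: surv_nn[OF elp p] simp del: surv_dist.simps)
  have each: "(\<lambda>t. ?mu (Suc t) s) \<longlonglongrightarrow> 0" for s
  proof (rule Lim_null_comparison[OF _ tot])
    show "\<forall>\<^sub>F t in sequentially. norm (?mu (Suc t) s) \<le> (\<Sum>s\<in>UNIV. ?mu (Suc t) s)"
      using le_tot surv_nn[OF elp p] by (intro always_eventually allI) (simp del: surv_dist.simps)
  qed
  have x0: "(\<lambda>k. \<Sum>s\<in>UNIV. ?mu (Suc k) s * (g s * (MAX a. Qs s a))) \<longlonglongrightarrow> 0"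
  proof -
    have "(\<lambda>k. \<Sum>s\<in>UNIV. ?mu (Suc k) s * (g s * (MAX a. Qs s a))) \<longlonglongrightarrow> (\<Sum>s\<in>(UNIV::'s set). 0)"
      by (rule tendsto_sum[of UNIV "\<lambda>s k. ?mu (Suc k) s * (g s * (MAX a. Qs s a))" "\<lambda>s. 0"])
         (rule tendsto_mult_left_zero[OF each])
    then show ?thesis by simp
  qed
  have "summable (\<lambda>t. \<Sum>s\<in>UNIV. ?mu (Suc t) s * R s)"
  proof (rule summable_sum)
    fix s
    show "summable (\<lambda>t. ?mu (Suc t) s * R s)"
    proof (rule summable_comparison_test'[OF summable_mult2[OF summ, of "\<bar>R s\<bar>"]])
      fix t
      show "norm (?mu (Suc t) s * R s) \<le> (\<Sum>s\<in>UNIV. ?mu (Suc t) s) * \<bar>R s\<bar>"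
        using le_tot[of t s] surv_nn[OF elp p, of "Suc t" s]
        by (simp add: abs_mult mult_right_mono del: surv_dist.simps)
    qed
  qed
  then have "(\<lambda>t. \<Sum>s\<in>UNIV. ?mu (Suc t) s * R s) sums Jval P R s0 Sbot pol"
    unfolding Jval_def by (rule summable_sums)
  then have "(\<lambda>n. \<Sum>t<n. \<Sum>s\<in>UNIV. ?mu (Suc t) s * R s) \<longlonglongrightarrow> Jval P R s0 Sbot pol"
    unfolding sums_def .
  then have "(\<lambda>k. \<Sum>t<Suc k. \<Sum>s\<in>UNIV. ?mu (Suc t) s * R s) \<longlonglongrightarrow> Jval P R s0 Sbot pol"
    by (rule LIMSEQ_Suc)
  from tendsto_add[OF this x0] show ?thesis unfolding Aseq_def by simp
qed

lemma optimal: "is_policy polstar \<Longrightarrow> greedy Qs polstar \<Longrightarrow> is_policy pol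
   \<Longrightarrow> Jval P R s0 Sbot pol \<le> Jval P R s0 Sbot polstar"
proof -
  assume ps: "is_policy polstar" and gr: "greedy Qs polstar" and p: "is_policy pol"
  have "Aseq P R Sbot s0 Qs polstar = (\<lambda>k. Jstar)" by (rule ext) (rule A_eq[OF ps gr])
  then have "(\<lambda>k. Jstar) \<longlonglongrightarrow> Jval P R s0 Sbot polstar" using A_lim[OF ps] by simp
  then have "Jval P R s0 Sbot polstar = Jstar" by (simp add: LIMSEQ_const_iff)
  moreover have "Jval P R s0 Sbot pol \<le> Jstar"
    using A_lim[OF p] A_le[OF p] by (intro LIMSEQ_le_const2) auto
  ultimately show ?thesis by simp
qed

end

theorem theorem1:
  fixes P :: "'s::finite \<Rightarrow> 'a::finite \<Rightarrow> 's \<Rightarrow> real"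
    and R :: "'s \<Rightarrow> real" and rho :: "'s \<Rightarrow> real"
    and Sbot :: "'s set" and s0 :: 's and \<gamma> :: "'s \<Rightarrow> real"
  assumes elp: "is_ELP P rho Sbot s0"
    and gamma_range: "\<forall>s. 0 \<le> \<gamma> s \<and> \<gamma> s \<le> 1"
    and gamma_term: "\<forall>s\<in>Sbot. \<gamma> s < 1"
  shows "(\<exists>!Q. bellman P R \<gamma> Q = Q)
    \<and> (\<forall>Q0 s a. (\<lambda>n. (bellman P R \<gamma> ^^ n) Q0 s a) \<longlonglongrightarrow> (THE Q. bellman P R \<gamma> Q = Q) s a)
    \<and> (\<gamma> = gamma_epi Sbot \<longrightarrow>
        (\<forall>Qstar. bellman P R \<gamma> Qstar = Qstar \<longrightarrow>
          (\<forall>polstar. is_policy polstar \<and> greedy Qstar polstar \<longrightarrow>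
             (\<forall>pol. is_policy pol \<longrightarrow> Jval P R s0 Sbot pol \<le> Jval P R s0 Sbot polstar))))"
proof -
  interpret M1: mdp P \<gamma>
    using ePnn[OF elp] ePsum[OF elp] gamma_range by unfold_locales auto
  have nt: "\<And>M (f::'s \<Rightarrow> 'a). M \<noteq> {} \<Longrightarrow> M \<inter> Sbot = {} \<Longrightarrow> (\<forall>s\<in>M. \<forall>s'. 0 < P s (f s) s' \<longrightarrow> s' \<in> M) \<Longrightarrow> False"
    using no_trap[OF elp] by blast
  interpret M2: mdp_term P \<gamma> Sbot
    using gamma_term nt by unfold_locales auto
  obtain N where hN: "\<And>s. hseq P \<gamma> N s < 1" using M2.exists_N by blast
  have U: "\<And>Q1 Q2. bellman P R \<gamma> Q1 = Q1 \<Longrightarrow> bellman P R \<gamma> Q2 = Q2 \<Longrightarrow> Q1 = Q2"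
    using M1.uniq[OF hN] by blast
  have C: "\<exists>L. bellman P R \<gamma> L = L \<and> (\<forall>s a. (\<lambda>n. (bellman P R \<gamma> ^^ n) Q0 s a) \<longlonglongrightarrow> L s a)" for Q0
    using M1.conv[OF hN] by blast
  obtain L0 where L0: "bellman P R \<gamma> L0 = L0" using C by blast
  have ex1: "\<exists>!Q. bellman P R \<gamma> Q = Q" using L0 U by blast
  have the: "(THE Q. bellman P R \<gamma> Q = Q) = L0" using L0 U by blast
  have part2: "\<forall>Q0 s a. (\<lambda>n. (bellman P R \<gamma> ^^ n) Q0 s a) \<longlonglongrightarrow> (THE Q. bellman P R \<gamma> Q = Q) s a"
  proof (intro allI)
    fix Q0 s a
    obtain L where L: "bellman P R \<gamma> L = L" "\<forall>s a. (\<lambda>n. (bellman P R \<gamma> ^^ n) Q0 s a) \<longlonglongrightarrow> L s a"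
      using C by blast
    have "L = L0" using U L(1) L0 by blast
    then show "(\<lambda>n. (bellman P R \<gamma> ^^ n) Q0 s a) \<longlonglongrightarrow> (THE Q. bellman P R \<gamma> Q = Q) s a"
      using L(2) the by simp
  qed
  have part3: "\<gamma> = gamma_epi Sbot \<longrightarrow>
        (\<forall>Qstar. bellman P R \<gamma> Qstar = Qstar \<longrightarrow>
          (\<forall>polstar. is_policy polstar \<and> greedy Qstar polstar \<longrightarrow>
             (\<forall>pol. is_policy pol \<longrightarrow> Jval P R s0 Sbot pol \<le> Jval P R s0 Sbot polstar)))"
    using optimal[OF elp] by blast
  show ?thesis using ex1 part2 part3 by blast
qed

end
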